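(* Let $\ell\ge 3$ be a fixed integer. For a positive integer $k$, let $G_{\ell,k}$ be the graph constructed as follows: take disjoint paths $x_{0,r}x_{1,r}\cdots x_{\ell,r}$ for $1\le r\le k$, identify $x_{0,1},\dots,x_{0,k}$ into a single vertex $u$, identify $x_{\ell,1},\dots,x_{\ell,k}$ into a single vertex $v$, and add the edge $uv$. Take $u$ as the special vertex. Then for every $k$ sufficiently large and every $1\le r\le k$, the spectral path from $x_{\ell-1,r}$ to $u$ in $G_{\ell,k}$ has length $\ell-1$, while the distance between $x_{\ell-1,r}$ and $u$ is $2$.
   Context: For a finite connected graph $G$ with Laplacian $L=D-A$ and special vertex $s$ such that $G-s$ is connected, let $L_s$ be $L$ with row and column $s$ deleted, and let $f_s$ be an eigenvector of $L_s$ for its smallest eigenvalue, chosen positive on $V\setminus\{s\}$ (possible by a result of Steinerberger), extended by $f_s(s)=0$. Every vertex $x\ne s$ has a neighbor with strictly smaller $f_s$-value. The spectral tree $T_s$ is formed by joining each vertex $x\neq s$ to a neighbor minimizing $f_s$ (ties broken arbitrarily); the spectral path from $x$ to $s$ is the unique path from $x$ to $s$ in $T_s$. Length of a path is its number of edges. *)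

theory Defs
  imports Complex_Main
begin

text \<open>Graphs are given by a vertex set V and a symmetric irreflexive adjacency relation E.\<close>

definition degree :: "'a set \<Rightarrow> ('a \<Rightarrow> 'a \<Rightarrow> bool) \<Rightarrow> 'a \<Rightarrow> nat" where
  "degree V E x = card {y \<in> V. E x y}"

text \<open>The reduced Laplacian L_s = (D - A) with row and column s deleted, acting on
  functions on V - {s}: (L_s g)(x) = deg(x) g(x) - sum of g(y) over neighbours y of x, y \<noteq> s.\<close>
definition red_laplacian :: "'a set \<Rightarrow> ('a \<Rightarrow> 'a \<Rightarrow> bool) \<Rightarrow> 'a \<Rightarrow> ('a \<Rightarrow> real) \<Rightarrow> 'a \<Rightarrow> real" where
  "red_laplacian V E s g x =
     real (degree V E x) * g x - (\<Sum>y \<in> {y \<in> V - {s}. E x y}. g y)"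

definition is_red_eigenpair :: "'a set \<Rightarrow> ('a \<Rightarrow> 'a \<Rightarrow> bool) \<Rightarrow> 'a \<Rightarrow> real \<Rightarrow> ('a \<Rightarrow> real) \<Rightarrow> bool" where
  "is_red_eigenpair V E s lam g \<longleftrightarrow>
     (\<exists>x \<in> V - {s}. g x \<noteq> 0) \<and> (\<forall>x \<in> V - {s}. red_laplacian V E s g x = lam * g x)"

definition spectral_vector :: "'a set \<Rightarrow> ('a \<Rightarrow> 'a \<Rightarrow> bool) \<Rightarrow> 'a \<Rightarrow> ('a \<Rightarrow> real) \<Rightarrow> bool" where
  "spectral_vector V E s f \<longleftrightarrow>
     (\<exists>lam. is_red_eigenpair V E s lam f \<and>
            (\<forall>mu h. is_red_eigenpair V E s mu h \<longrightarrow> lam \<le> mu)) \<and>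
     (\<forall>x \<in> V - {s}. f x > 0) \<and> f s = 0"

text \<open>A parent map of a spectral tree T_s: every x \<noteq> s is joined to a neighbour minimizing f
  (ties broken arbitrarily).\<close>
definition spectral_parent :: "'a set \<Rightarrow> ('a \<Rightarrow> 'a \<Rightarrow> bool) \<Rightarrow> 'a \<Rightarrow> ('a \<Rightarrow> real) \<Rightarrow> ('a \<Rightarrow> 'a) \<Rightarrow> bool" where
  "spectral_parent V E s f p \<longleftrightarrow>
     (\<forall>x \<in> V - {s}. p x \<in> V \<and> E x (p x) \<and> (\<forall>y \<in> V. E x y \<longrightarrow> f (p x) \<le> f y))"

text \<open>The spectral path from x to s is the unique tree path, i.e. the chain x, p x, p (p x), ...
  until s is reached; its length is the number of edges.\<close>
definition spectral_path_length :: "'a \<Rightarrow> ('a \<Rightarrow> 'a) \<Rightarrow> 'a \<Rightarrow> nat" where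
  "spectral_path_length s p x = (LEAST n. (p ^^ n) x = s)"

definition is_walk :: "'a set \<Rightarrow> ('a \<Rightarrow> 'a \<Rightarrow> bool) \<Rightarrow> 'a list \<Rightarrow> bool" where
  "is_walk V E ws \<longleftrightarrow> ws \<noteq> [] \<and> set ws \<subseteq> V \<and>
     (\<forall>i. Suc i < length ws \<longrightarrow> E (ws ! i) (ws ! Suc i))"

definition graph_dist :: "'a set \<Rightarrow> ('a \<Rightarrow> 'a \<Rightarrow> bool) \<Rightarrow> 'a \<Rightarrow> 'a \<Rightarrow> nat" where
  "graph_dist V E x y =
     (LEAST n. \<exists>ws. is_walk V E ws \<and> hd ws = x \<and> last ws = y \<and> length ws = Suc n)"

text \<open>Vertices are pairs of naturals: u = (0,0), v = (l,0), and x_{i,r} = (i,r) for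
  1 \<le> i \<le> l-1, 1 \<le> r \<le> k.  gvert l i r is the vertex x_{i,r} after identification.\<close>
definition gvert :: "nat \<Rightarrow> nat \<Rightarrow> nat \<Rightarrow> nat \<times> nat" where
  "gvert l i r = (if i = 0 then (0, 0) else if i = l then (l, 0) else (i, r))"

definition G_V :: "nat \<Rightarrow> nat \<Rightarrow> (nat \<times> nat) set" where
  "G_V l k = {(0, 0), (l, 0)} \<union> {(i, r). 1 \<le> i \<and> i \<le> l - 1 \<and> 1 \<le> r \<and> r \<le> k}"

definition G_E :: "nat \<Rightarrow> nat \<Rightarrow> nat \<times> nat \<Rightarrow> nat \<times> nat \<Rightarrow> bool" where
  "G_E l k a b \<longleftrightarrow>
     (\<exists>i r. 1 \<le> r \<and> r \<le> k \<and> i < l \<and>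
        ((a = gvert l i r \<and> b = gvert l (Suc i) r) \<or> (b = gvert l i r \<and> a = gvert l (Suc i) r)))
     \<or> (a = (0, 0) \<and> b = (l, 0)) \<or> (a = (l, 0) \<and> b = (0, 0))"

end

theory Submission
  imports Defs
begin


lemma gvert_fst: "i \<le> l \<Longrightarrow> fst (gvert l i r) = i" by (simp add: gvert_def)
lemma gvert_int: "1 \<le> i \<Longrightarrow> i < l \<Longrightarrow> gvert l i r = (i,r)" by (simp add: gvert_def)
lemma gvert_in: "i \<le> l \<Longrightarrow> 1 \<le> r \<Longrightarrow> r \<le> k \<Longrightarrow> gvert l i r \<in> G_V l k"
  by (auto simp: gvert_def G_V_def)
lemma gvert_ne0: "1 \<le> i \<Longrightarrow> i \<le> l \<Longrightarrow> gvert l i r \<noteq> (0,0)"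
  using gvert_fst[of i l r] by auto
lemma finite_GV: "finite (G_V l k)"
  by (rule finite_subset[of _ "{0..l} \<times> {0..k}"]) (auto simp: G_V_def)

lemma nbr_int:
  assumes "1 \<le> i" "i < l" "1 \<le> r" "r \<le> k"
  shows "G_E l k (i,r) y \<longleftrightarrow> y = gvert l (i-1) r \<or> y = gvert l (Suc i) r"
proof
  assume "G_E l k (i,r) y"
  then consider (a) i' r' where "1 \<le> r'" "r' \<le> k" "i' < l" "(i,r) = gvert l i' r'" "y = gvert l (Suc i') r'"
   | (b) i' r' where "1 \<le> r'" "r' \<le> k" "i' < l" "y = gvert l i' r'" "(i,r) = gvert l (Suc i') r'"
   | (c) "(i,r) = (0,0)" | (d) "(i,r) = (l,0)"
    unfolding G_E_def by blast
  then show "y = gvert l (i-1) r \<or> y = gvert l (Suc i) r"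
  proof cases
    case a
    have "i' = i" using gvert_fst[of i' l r'] a assms by (metis fst_conv less_imp_le)
    moreover then have "r' = r" using a assms by (simp add: gvert_def split: if_splits)
    ultimately show ?thesis using a by simp
  next
    case b
    have "Suc i' = i" using gvert_fst[of "Suc i'" l r'] b by (metis fst_conv Suc_leI)
    then have "r' = r" using b assms by (auto simp: gvert_def split: if_splits)
    then show ?thesis using b \<open>Suc i' = i\<close> by auto
  next
    case c then show ?thesis using assms by simp
  next
    case d then show ?thesis using assms by simp
  qed
next
  assume "y = gvert l (i-1) r \<or> y = gvert l (Suc i) r"
  then show "G_E l k (i,r) y"
  proof
    assume y: "y = gvert l (i-1) r"
    have e: "(i,r) = gvert l (Suc (i-1)) r" using assms by (simp add: gvert_def)
    show ?thesis unfolding G_E_def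
      apply (rule disjI1)
      apply (rule exI[of _ "i-1"], rule exI[of _ r])
      using assms y e by auto
  next
    assume y: "y = gvert l (Suc i) r"
    have e: "(i,r) = gvert l i r" using assms by (simp add: gvert_def)
    show ?thesis unfolding G_E_def
      apply (rule disjI1)
      apply (rule exI[of _ i], rule exI[of _ r])
      using assms y e by auto
  qed
qed

lemma nbr_v:
  assumes "3 \<le> l"
  shows "G_E l k (l,0) y \<longleftrightarrow> y = (0,0) \<or> (\<exists>r. 1 \<le> r \<and> r \<le> k \<and> y = (l-1,r))"
proof
  assume "G_E l k (l,0) y"
  then consider (a) i' r' where "1 \<le> r'" "r' \<le> k" "i' < l" "(l,0) = gvert l i' r'" "y = gvert l (Suc i') r'"
   | (b) i' r' where "1 \<le> r'" "r' \<le> k" "i' < l" "y = gvert l i' r'" "(l,0) = gvert l (Suc i') r'"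
   | (c) "(l,0) = ((0::nat),(0::nat))" | (d) "y = (0,0)"
    unfolding G_E_def by blast
  then show "y = (0,0) \<or> (\<exists>r. 1 \<le> r \<and> r \<le> k \<and> y = (l-1,r))"
  proof cases
    case a
    then show ?thesis using gvert_fst[of i' l r'] by (metis fst_conv less_imp_le less_irrefl)
  next
    case b
    have "Suc i' = l" using gvert_fst[of "Suc i'" l r'] b by (metis fst_conv Suc_leI)
    then have "y = (l-1, r')" using b assms by (auto simp: gvert_def)
    then show ?thesis using b by auto
  next
    case c then show ?thesis using assms by simp
  next
    case d then show ?thesis by simp
  qed
next
  assume "y = (0,0) \<or> (\<exists>r. 1 \<le> r \<and> r \<le> k \<and> y = (l-1,r))"
  then show "G_E l k (l,0) y"
  proof
    assume "y = (0,0)" then show ?thesis unfolding G_E_def by simp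
  next
    assume "\<exists>r. 1 \<le> r \<and> r \<le> k \<and> y = (l-1,r)"
    then obtain r where r: "1 \<le> r" "r \<le> k" "y = (l-1,r)" by blast
    have e1: "y = gvert l (l-1) r" using r assms by (simp add: gvert_def)
    have e2: "(l,0) = gvert l (Suc (l-1)) r" using assms by (simp add: gvert_def)
    show ?thesis unfolding G_E_def
      apply (rule disjI1)
      apply (rule exI[of _ "l-1"], rule exI[of _ r])
      using assms r e1 e2 by auto
  qed
qed

lemma sum_drop_s:
  assumes "finite V" "f s = 0"
  shows "(\<Sum>y\<in>{y\<in>V-{s}. E x y}. f y) = (\<Sum>y\<in>{y\<in>V. E x y}. f y)"
  by (rule sum.mono_neutral_left) (use assms in auto)

lemma nset_int:
  assumes "1 \<le> i" "i < l" "1 \<le> r" "r \<le> k"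
  shows "{y\<in>G_V l k. G_E l k (i,r) y} = {gvert l (i-1) r, gvert l (Suc i) r}"
  using nbr_int[OF assms] gvert_in[of "i-1" l r k] gvert_in[of "Suc i" l r k] assms by auto

lemma nset_v:
  assumes "3 \<le> l"
  shows "{y\<in>G_V l k. G_E l k (l,0) y} = insert (0,0) ((\<lambda>r. (l-1,r)) ` {1..k})"
  using nbr_v[OF assms] assms by (auto simp: G_V_def)



fun Sq :: "real \<Rightarrow> nat \<Rightarrow> real" where
  "Sq t 0 = 0" | "Sq t (Suc 0) = 1" | "Sq t (Suc (Suc n)) = (2 - t) * Sq t (Suc n) - Sq t n"

lemma Sq_D: "Sq lam (Suc n) - Sq lam n = 1 - lam * (\<Sum>j\<le>n. Sq lam j)"
proof (induction n)
  case 0 then show ?case by simp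
next
  case (Suc n)
  have "Sq lam (Suc (Suc n)) - Sq lam (Suc n) = (Sq lam (Suc n) - Sq lam n) - lam * Sq lam (Suc n)"
    by (simp add: algebra_simps)
  also have "\<dots> = 1 - lam * (\<Sum>j\<le>Suc n. Sq lam j)" using Suc.IH by (simp add: algebra_simps)
  finally show ?case .
qed

lemma Sq_rec: "1 \<le> i \<Longrightarrow> Sq lam (Suc i) = (2 - lam) * Sq lam i - Sq lam (i-1)"
  by (cases i) auto

lemma key:
  fixes lam k :: real and m :: nat
  assumes m1: "1 \<le> m" and pos: "\<And>i. 1 \<le> i \<Longrightarrow> i \<le> Suc m \<Longrightarrow> Sq lam i > 0"
    and kbig: "k > 2 * (real (Suc m))^2"
    and eq: "(k + 1 - lam) * Sq lam (Suc m) = k * Sq lam m"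
  shows "\<And>i. 1 \<le> i \<Longrightarrow> i \<le> m \<Longrightarrow> Sq lam (i-1) < Sq lam (Suc i)"
proof -
  have nn: "Sq lam j \<ge> 0" if "j \<le> Suc m" for j
    using pos[of j] that by (cases "j = 0") auto
  have sumnn: "(\<Sum>j\<le>n. Sq lam j) \<ge> 0" if "n \<le> m" for n
    by (rule sum_nonneg) (use nn that in auto)
  have kpos: "k > 0" using kbig by (smt (verit) zero_le_power2)
  have S1: "Sq lam (Suc m) > 0" using pos by simp
  have S0: "Sq lam m > 0" using pos m1 by simp
  have lampos: "lam > 0"
  proof (rule ccontr)
    assume "\<not> lam > 0" hence l0: "lam \<le> 0" by simp
    have "lam * (\<Sum>j\<le>m. Sq lam j) \<le> 0" using l0 sumnn[of m] by (simp add: mult_nonpos_nonneg)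
    hence d: "Sq lam (Suc m) - Sq lam m \<ge> 1" using Sq_D[of lam m] by linarith
    have a: "(k+1-lam) * Sq lam (Suc m) \<ge> (k+1) * Sq lam (Suc m)"
      using l0 S1 by (intro mult_right_mono) auto
    have b: "k * Sq lam (Suc m) \<ge> k * (Sq lam m + 1)"
      using kpos d by (intro mult_left_mono) auto
    show False using a b eq S1 kpos by (simp add: algebra_simps)
  qed
  have Sle: "Sq lam n \<le> real n" if "n \<le> Suc m" for n
    using that
  proof (induction n)
    case 0 then show ?case by simp
  next
    case (Suc n)
    have "lam * (\<Sum>j\<le>n. Sq lam j) \<ge> 0" using lampos sumnn[of n] Suc.prems by simp
    then have "Sq lam (Suc n) - Sq lam n \<le> 1" using Sq_D[of lam n] by linarith
    then show ?case using Suc by simp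
  qed
  have sumle: "(\<Sum>j\<le>m. Sq lam j) \<le> (real (Suc m))^2"
  proof -
    have "(\<Sum>j\<le>m. Sq lam j) \<le> (\<Sum>j\<le>m. real (Suc m))"
      proof (rule sum_mono)
      fix j assume "j \<in> {..m}"
      then have "j \<le> Suc m" by simp
      then show "Sq lam j \<le> real (Suc m)" using Sle[of j] by linarith
    qed
    also have "\<dots> = (real (Suc m))^2" by (simp add: power2_eq_square)
    finally show ?thesis .
  qed
  define g where "g i = Sq lam (Suc i) - Sq lam (i-1)" for i
  define d where "d = Sq lam (Suc m) - Sq lam m"
  have kd: "k * d = (lam - 1) * Sq lam (Suc m)" using eq unfolding d_def by (simp add: algebra_simps)
  have gm_eq: "g m = 2 * d + lam * Sq lam m" using Sq_rec[OF m1, of lam] unfolding g_def d_def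
    by (simp add: algebra_simps)
  have gm: "g m > 0"
  proof (cases "lam \<ge> 1")
    case True
    then have "k * d \<ge> 0" using kd S1 by simp
    then have "d \<ge> 0" using kpos by (simp add: zero_le_mult_iff)
    then show ?thesis using gm_eq lampos S0 by (smt (verit) mult_pos_pos)
  next
    case False
    then have "k * d < 0" using kd S1 by (simp add: mult_neg_pos)
    then have dneg: "d < 0" using kpos by (simp add: mult_less_0_iff)
    then have "lam * (\<Sum>j\<le>m. Sq lam j) > 1" using Sq_D[of lam m] unfolding d_def by linarith
    moreover have "lam * (\<Sum>j\<le>m. Sq lam j) \<le> lam * (real (Suc m))^2"
      using sumle lampos by (simp add: mult_left_mono)
    ultimately have l1: "lam * (real (Suc m))^2 > 1" by linarith
    have "lam * k \<ge> lam * (2 * (real (Suc m))^2)" using kbig lampos by (simp add: mult_left_mono)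
    then have lk: "lam * k > 2" using l1 by linarith
    have "k * g m = 2 * ((lam - 1) * Sq lam (Suc m)) + (lam * k) * Sq lam m"
      using gm_eq kd by (simp add: algebra_simps)
    moreover have "(lam - 1) * Sq lam (Suc m) \<ge> - Sq lam (Suc m)" using lampos S1 by (simp add: algebra_simps)
    moreover have "(lam * k) * Sq lam m > 2 * Sq lam m" using lk S0 by simp
    moreover have "Sq lam (Suc m) < Sq lam m" using dneg d_def by simp
    ultimately have "k * g m > 0" by linarith
    then show ?thesis using kpos by (simp add: zero_less_mult_iff)
  qed
  have gmono: "g (Suc i) \<le> g i" if "1 \<le> i" "i < m" for i
  proof -
    have r1: "Sq lam (Suc (Suc i)) = (2 - lam) * Sq lam (Suc i) - Sq lam i" by simp
    have r2: "Sq lam (Suc i) = (2 - lam) * Sq lam i - Sq lam (i-1)" using Sq_rec[OF that(1)] .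
    have "g (Suc i) - g i = - lam * Sq lam (Suc i) - lam * Sq lam i"
      unfolding g_def using r1 r2 by (simp add: algebra_simps)
    moreover have "lam * Sq lam (Suc i) > 0" "lam * Sq lam i > 0" using lampos pos that by auto
    ultimately show ?thesis by linarith
  qed
  fix i assume i: "1 \<le> i" "i \<le> m"
  have "g i \<ge> g m" using i(2)
  proof (induction rule: inc_induct)
    case base then show ?case by simp
  next
    case (step n) then show ?case using gmono[of n] i by linarith
  qed
  then show "Sq lam (i-1) < Sq lam (Suc i)" using gm unfolding g_def by linarith
qed



lemma dist_part:
  assumes l3: "3 \<le> l" and r: "1 \<le> r" "r \<le> k"
  shows "graph_dist (G_V l k) (G_E l k) (l - 1, r) (0, 0) = 2"
  unfolding graph_dist_def
proof (rule Least_equality)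
  let ?ws = "[(l-1,r), (l,0), (0::nat,0::nat)]"
  have e1: "G_E l k (l-1,r) (l,0)"
    using nbr_int[of "l-1" l r k "(l,0)"] l3 r by (simp add: gvert_def)
  have e2: "G_E l k (l,0) (0,0)" unfolding G_E_def by simp
  have "set ?ws \<subseteq> G_V l k" using l3 r by (auto simp: G_V_def)
  moreover have "\<forall>i. Suc i < length ?ws \<longrightarrow> G_E l k (?ws ! i) (?ws ! Suc i)"
  proof (intro allI impI)
    fix i assume "Suc i < length ?ws"
    then have "i = 0 \<or> i = 1" by auto
    then show "G_E l k (?ws ! i) (?ws ! Suc i)" using e1 e2 by auto
  qed
  ultimately have "is_walk (G_V l k) (G_E l k) ?ws" unfolding is_walk_def by simp
  then show "\<exists>ws. is_walk (G_V l k) (G_E l k) ws \<and> hd ws = (l - 1, r) \<and> last ws = (0, 0) \<and> length ws = Suc 2"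
    by (intro exI[of _ ?ws]) simp
next
  fix n assume "\<exists>ws. is_walk (G_V l k) (G_E l k) ws \<and> hd ws = (l - 1, r) \<and> last ws = (0, 0) \<and> length ws = Suc n"
  then obtain ws where w: "is_walk (G_V l k) (G_E l k) ws" "hd ws = (l - 1, r)" "last ws = (0, 0)" "length ws = Suc n"
    by blast
  show "2 \<le> n"
  proof (rule ccontr)
    assume "\<not> 2 \<le> n"
    then have "n = 0 \<or> n = 1" by auto
    then show False
    proof
      assume "n = 0"
      then obtain a where "ws = [a]" using w(4) by (auto simp: length_Suc_conv)
      then show False using w l3 by simp
    next
      assume "n = 1"
      then obtain a b where ab: "ws = [a,b]" using w(4) by (auto simp: length_Suc_conv)
      then have "G_E l k (l-1,r) (0,0)" using w unfolding is_walk_def by force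
      then have dd: "(0,0) = gvert l (l-1-1) r \<or> (0::nat,0::nat) = gvert l (Suc (l-1)) r"
        using nbr_int[of "l-1" l r k "(0,0)"] l3 r by simp
      have f1: "fst (gvert l (l-1-1) r) = l-1-1" by (rule gvert_fst) simp
      have f2: "gvert l (Suc (l-1)) r = (l,0)" using l3 by (simp add: gvert_def)
      have n0: "l-1-1 \<noteq> 0" "l \<noteq> 0" using l3 by arith+
      show False
      proof (cases "(0::nat,0::nat) = gvert l (l-1-1) r")
        case True
        then have "fst (gvert l (l-1-1) r) = 0" by (metis fst_conv)
        then show False using f1 n0 by simp
      next
        case False
        then show False using dd f2 n0 by simp
      qed
    qed
  qed
qed



lemma path_part:
  assumes l3: "3 \<le> l" and kb: "2 * l^2 + 1 \<le> k" and r: "1 \<le> r" "r \<le> k"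
    and sv: "spectral_vector (G_V l k) (G_E l k) (0, 0) f"
    and sp: "spectral_parent (G_V l k) (G_E l k) (0, 0) f p"
  shows "spectral_path_length (0, 0) p (l - 1, r) = l - 1"
proof -
  let ?V = "G_V l k" and ?E = "G_E l k"
  from sv obtain lam where ep: "is_red_eigenpair ?V ?E (0,0) lam f"
    and fpos: "\<forall>x\<in>?V-{(0,0)}. f x > 0" and fu: "f (0,0) = 0"
    unfolding spectral_vector_def by blast
  have eqn: "\<And>x. x \<in> ?V-{(0,0)} \<Longrightarrow> red_laplacian ?V ?E (0,0) f x = lam * f x"
    using ep unfolding is_red_eigenpair_def by blast
  have red: "red_laplacian ?V ?E (0,0) f x = real (card {y\<in>?V. ?E x y}) * f x - (\<Sum>y\<in>{y\<in>?V. ?E x y}. f y)" for x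
    unfolding red_laplacian_def degree_def using sum_drop_s[OF finite_GV, of f "(0,0)" l k ?E x] fu by simp
  have k1: "1 \<le> k" using kb by simp
  define F where "F r' i = f (gvert l i r')" for r' i
  have F0: "F r' 0 = 0" for r' unfolding F_def gvert_def using fu by simp
  have Fpos: "F r' i > 0" if "1 \<le> i" "i \<le> l" "1 \<le> r'" "r' \<le> k" for r' i
    unfolding F_def using fpos gvert_in[of i l r' k] gvert_ne0[of i l r'] that by blast
  have recF: "F r' (Suc i) = (2 - lam) * F r' i - F r' (i-1)" if "1 \<le> i" "i < l" "1 \<le> r'" "r' \<le> k" for r' i
  proof -
    have x: "(i,r') \<in> ?V - {(0,0)}" using gvert_in[of i l r' k] gvert_int[of i l r'] that by auto
    have ne: "gvert l (i-1) r' \<noteq> gvert l (Suc i) r'"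
      proof
      assume "gvert l (i-1) r' = gvert l (Suc i) r'"
      then have "fst (gvert l (i-1) r') = fst (gvert l (Suc i) r')" by simp
      moreover have "fst (gvert l (i-1) r') = i-1" by (rule gvert_fst) (use that in simp)
      moreover have "fst (gvert l (Suc i) r') = Suc i" by (rule gvert_fst) (use that in simp)
      ultimately show False by simp
    qed
    have "red_laplacian ?V ?E (0,0) f (i,r') = 2 * f (i,r') - (f (gvert l (i-1) r') + f (gvert l (Suc i) r'))"
      unfolding red nset_int[OF that] using ne by simp
    then have "2 * F r' i - (F r' (i-1) + F r' (Suc i)) = lam * F r' i"
      using eqn[OF x] gvert_int[of i l r'] that unfolding F_def by simp
    then show ?thesis by (simp add: algebra_simps)
  qed
  have FS: "F r' n = F r' (Suc 0) * Sq lam n" if "n \<le> l" "1 \<le> r'" "r' \<le> k" for r' n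
  proof -
    have all: "\<forall>n. Suc n \<le> l \<longrightarrow> F r' n = F r' (Suc 0) * Sq lam n \<and> F r' (Suc n) = F r' (Suc 0) * Sq lam (Suc n)"
    proof
      fix n show "Suc n \<le> l \<longrightarrow> F r' n = F r' (Suc 0) * Sq lam n \<and> F r' (Suc n) = F r' (Suc 0) * Sq lam (Suc n)"
      proof (induction n)
        case 0 then show ?case using F0 by simp
      next
        case (Suc n)
        show ?case
        proof
          assume a: "Suc (Suc n) \<le> l"
          then have "Suc n \<le> l" by simp
          then have ih: "F r' n = F r' (Suc 0) * Sq lam n" "F r' (Suc n) = F r' (Suc 0) * Sq lam (Suc n)"
            using Suc.IH by blast+
          have "F r' (Suc (Suc n)) = (2 - lam) * F r' (Suc n) - F r' n"
            using recF[of "Suc n" r'] a that by simp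
          then show "F r' (Suc n) = F r' (Suc 0) * Sq lam (Suc n) \<and> F r' (Suc (Suc n)) = F r' (Suc 0) * Sq lam (Suc (Suc n))"
            using ih by (simp add: algebra_simps)
        qed
      qed
    qed
    show ?thesis
    proof (cases n)
      case 0 then show ?thesis using F0 by simp
    next
      case (Suc n') then show ?thesis using spec[OF all, of n'] that by blast
    qed
  qed
  have Spos: "Sq lam i > 0" if "1 \<le> i" "i \<le> l" for i
  proof -
    have "F 1 i = F 1 (Suc 0) * Sq lam i" using FS[of i 1] that k1 by simp
    moreover have "F 1 i > 0" "F 1 (Suc 0) > 0" using Fpos that k1 l3 by auto
    ultimately show ?thesis by (metis zero_less_mult_pos)
  qed
  define w where "w = f (l,0)"
  have Fl: "F r' l = w" for r' unfolding F_def w_def gvert_def by simp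
  have wpos: "w > 0" using Fpos[of l 1] k1 l3 Fl by simp
  have Slpos: "Sq lam l > 0" using Spos l3 by simp
  have fl1: "f (l-1, r') = w * Sq lam (l-1) / Sq lam l" if "1 \<le> r'" "r' \<le> k" for r'
  proof -
    have "w = F r' (Suc 0) * Sq lam l" using FS[of l r'] that Fl by simp
    moreover have "f (l-1,r') = F r' (Suc 0) * Sq lam (l-1)"
      using FS[of "l-1" r'] that gvert_int[of "l-1" l r'] l3 unfolding F_def by simp
    ultimately show ?thesis using Slpos by (simp add: field_simps)
  qed
  have vV: "(l,0) \<in> ?V - {(0,0)}" using l3 by (simp add: G_V_def)
  have inj: "inj_on (\<lambda>r'. (l-1,r')) {1..k}" by (simp add: inj_on_def)
  have notin: "(0,0) \<notin> (\<lambda>r'. (l-1,r')) ` {1..k}" using l3 by auto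
  have cardv: "card {y\<in>?V. ?E (l,0) y} = Suc k"
    unfolding nset_v[OF l3] using notin inj by (simp add: card_image)
  have sumv: "(\<Sum>y\<in>{y\<in>?V. ?E (l,0) y}. f y) = real k * (w * Sq lam (l-1) / Sq lam l)"
  proof -
    have "(\<Sum>y\<in>{y\<in>?V. ?E (l,0) y}. f y) = f (0,0) + (\<Sum>y\<in>(\<lambda>r'. (l-1,r')) ` {1..k}. f y)"
      unfolding nset_v[OF l3] using notin by simp
    also have "\<dots> = (\<Sum>r'\<in>{1..k}. f (l-1,r'))" using fu inj by (simp add: sum.reindex)
    also have "\<dots> = (\<Sum>r'\<in>{1..k}. w * Sq lam (l-1) / Sq lam l)" using fl1 by (intro sum.cong) auto
    also have "\<dots> = real k * (w * Sq lam (l-1) / Sq lam l)" by simp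
    finally show ?thesis .
  qed
  have ev: "real (Suc k) * w - real k * (w * Sq lam (l-1) / Sq lam l) = lam * w"
    using eqn[OF vV] unfolding red cardv sumv w_def by simp
  have "w * ((real k + 1 - lam) * Sq lam l - real k * Sq lam (l-1)) = 0"
    using ev Slpos by (simp add: field_simps)
  then have eqk: "(real k + 1 - lam) * Sq lam (Suc (l-1)) = real k * Sq lam (l-1)"
    using wpos l3 by simp
  have "real (2 * l^2 + 1) \<le> real k" using kb by (simp only: of_nat_le_iff)
  then have kbig: "real k > 2 * (real (Suc (l-1)))^2" using l3 by simp
  have mono: "Sq lam (i-1) < Sq lam (Suc i)" if "1 \<le> i" "i \<le> l-1" for i
    using key[of "l-1" lam "real k", OF _ _ kbig eqk] Spos l3 that by auto
  have par: "p (i,r) = gvert l (i-1) r" if "1 \<le> i" "i < l" for i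
  proof -
    have x: "(i,r) \<in> ?V - {(0,0)}" using gvert_in[of i l r k] gvert_int[of i l r] that r by auto
    then have pp: "p (i,r) \<in> ?V" "?E (i,r) (p (i,r))" "\<forall>y\<in>?V. ?E (i,r) y \<longrightarrow> f (p (i,r)) \<le> f y"
      using sp unfolding spectral_parent_def by blast+
    have alt: "p (i,r) = gvert l (i-1) r \<or> p (i,r) = gvert l (Suc i) r" using pp(2) nbr_int that r by blast
    have "f (p (i,r)) \<le> f (gvert l (i-1) r)"
      using pp(3) gvert_in[of "i-1" l r k] nbr_int[of i l r k "gvert l (i-1) r"] that r by auto
    moreover have "F r (i-1) < F r (Suc i)"
      using FS[of "i-1" r] FS[of "Suc i" r] mono[of i] that r Fpos[of 1 r] l3
      by (simp add: mult_strict_left_mono)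
    ultimately show ?thesis using alt unfolding F_def by force
  qed
  have iter: "(p ^^ n) (l-1, r) = gvert l (l-1-n) r" if "n \<le> l-1" for n
    using that
  proof (induction n)
    case 0 then show ?case using gvert_int[of "l-1" l r] l3 by simp
  next
    case (Suc n)
    then have "(p ^^ Suc n) (l-1,r) = p (gvert l (l-1-n) r)" by simp
    also have "\<dots> = p (l-1-n, r)" using gvert_int[of "l-1-n" l r] Suc.prems by simp
    also have "\<dots> = gvert l (l-1-n-1) r" using par[of "l-1-n"] Suc.prems by simp
    finally show ?case by simp
  qed
  show ?thesis unfolding spectral_path_length_def
  proof (rule Least_equality)
    show "(p ^^ (l-1)) (l-1, r) = (0,0)" using iter[of "l-1"] by (simp add: gvert_def)
  next
    fix y assume y: "(p ^^ y) (l-1, r) = (0,0)"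
    show "l - 1 \<le> y"
    proof (rule ccontr)
      assume "\<not> l - 1 \<le> y"
      then have "(p ^^ y) (l-1, r) = gvert l (l-1-y) r" "1 \<le> l-1-y" using iter[of y] by auto
      then show False using y gvert_ne0[of "l-1-y" l r] by simp
    qed
  qed
qed


theorem theorem17:
  fixes l :: nat
  assumes "l \<ge> 3"
  shows "\<exists>K. \<forall>k \<ge> K. \<forall>r. 1 \<le> r \<and> r \<le> k \<longrightarrow>
           (\<forall>f p. spectral_vector (G_V l k) (G_E l k) (0, 0) f \<and>
                  spectral_parent (G_V l k) (G_E l k) (0, 0) f p \<longrightarrow>
                  spectral_path_length (0, 0) p (l - 1, r) = l - 1) \<and>
           graph_dist (G_V l k) (G_E l k) (l - 1, r) (0, 0) = 2"
proof (intro exI[of _ "2 * l^2 + 1"] allI impI conjI)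
  fix k r f p
  assume "2 * l^2 + 1 \<le> k" "1 \<le> r \<and> r \<le> k"
    "spectral_vector (G_V l k) (G_E l k) (0, 0) f \<and> spectral_parent (G_V l k) (G_E l k) (0, 0) f p"
  then show "spectral_path_length (0, 0) p (l - 1, r) = l - 1"
    using path_part[of l k r f p] assms by blast
next
  fix k r
  assume "2 * l^2 + 1 \<le> k" "1 \<le> r \<and> r \<le> k"
  then show "graph_dist (G_V l k) (G_E l k) (l - 1, r) (0, 0) = 2"
    using dist_part[of l r k] assms by blast
qed

end
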